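(* In the setting and notation of the context, for all $\phi\in C(\mathbb{T}^d\times\{1,\dots,d\})$, all $t\in[0,T]$ and all $n\in\mathbb{N}$, $$\mathbb E\langle\phi,\Lambda^{(n)}(t)\rangle_{x,l}\le d\,\lVert\phi\rVert_C\,\lVert\rho_0\rVert_C^2.$$
   Context: Fix $d\in\mathbb{N}$, $T>0$. Let $\mathbb{T}^d=\mathbb{R}^d/\mathbb{Z}^d$. For each $n\in\mathbb{N}$ let $\epsilon=\epsilon_n$ with $1/\epsilon\in\mathbb{N}$, $\mathbb{T}_\epsilon^d=(\epsilon\mathbb{Z}/\mathbb{Z})^d$, $\mathds1_l$ the $l$-th unit vector; $x\sim y$ means $y=x\pm\epsilon\mathds1_l$ for some $l$ and sign. $\eta(t)\in\{0,1\}^{\mathbb{T}_\epsilon^d}$ is the symmetric exclusion process: for each ordered pair $(x,y)$ with $x\sim y$, at rate $\epsilon^{-2}\eta(x)(1-\eta(y))$ the particle at $x$ jumps to $y$. Initial condition: $\rho_0\in C(\mathbb{T}^d)$ nonnegative; the $\eta(x,0)$ are independent Bernoulli with parameter $n\int_{B_\epsilon(x)}\rho_0\le1$, $B_\epsilon(x)=\prod_i[x_i-\epsilon/2,x_i+\epsilon/2]$. Nearest-neighbour measure on $\mathbb{T}^d\times\{1,\dots,d\}$: $\Lambda^{(n)}(t)=\frac1{\epsilon^dn^2}\sum_{l=1}^d\sum_{x}\eta(x,t)\eta(x+\epsilon\mathds1_l,t)\,\delta_{(x+\frac\epsilon2\mathds1_l,\,l)}$, and $\langle\phi,\mu\rangle_{x,l}=\sum_l\int\phi_l\,d\mu_l$.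 $\lVert\cdot\rVert_C$ is the supremum norm. *)

theory Defs
  imports "HOL-Analysis.Analysis"
begin

text \<open>Discrete torus (eps Z/Z)^d with 1/eps = N: a site is x :: 'd => nat with x i < N,
  representing the point eps*x. The dimension is d = CARD('d).\<close>

definition sites :: "nat \<Rightarrow> ('d::finite \<Rightarrow> nat) set" where
  "sites N = {x. \<forall>i. x i < N}"

text \<open>Configurations eta in {0,1}^sites (True = occupied).\<close>
definition configs :: "nat \<Rightarrow> (('d::finite \<Rightarrow> nat) \<Rightarrow> bool) set" where
  "configs N = sites N \<rightarrow>\<^sub>E (UNIV :: bool set)"

definition nbrs :: "nat \<Rightarrow> ('d::finite \<Rightarrow> nat) \<Rightarrow> ('d \<Rightarrow> nat) set" where
  "nbrs N x = (\<lambda>(l, s). x(l := (x l + s) mod N)) ` (UNIV \<times> {1, N - 1})"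

definition gen :: "nat \<Rightarrow> ((('d::finite \<Rightarrow> nat) \<Rightarrow> bool) \<Rightarrow> real)
    \<Rightarrow> (('d \<Rightarrow> nat) \<Rightarrow> bool) \<Rightarrow> real" where
  "gen N f \<eta> = (\<Sum>x\<in>sites N. \<Sum>y\<in>nbrs N x.
      real N ^ 2 * (if \<eta> x \<and> \<not> \<eta> y then f (\<eta>(x := False, y := True)) - f \<eta> else 0))"

text \<open>Transition semigroup P_t = exp(t L) of the (finite state) Markov chain:
  (P_t f)(eta) = E_eta f(eta(t)).\<close>
definition semigroup :: "nat \<Rightarrow> real \<Rightarrow> ((('d::finite \<Rightarrow> nat) \<Rightarrow> bool) \<Rightarrow> real)
    \<Rightarrow> (('d \<Rightarrow> nat) \<Rightarrow> bool) \<Rightarrow> real" where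
  "semigroup N t f \<eta> = (\<Sum>k. t ^ k / fact k * (gen N ^^ k) f \<eta>)"

definition cell_center :: "nat \<Rightarrow> ('d::finite \<Rightarrow> nat) \<Rightarrow> real ^ 'd" where
  "cell_center N x = (\<chi> i. real (x i) / real N)"

definition cell :: "nat \<Rightarrow> ('d::finite \<Rightarrow> nat) \<Rightarrow> (real ^ 'd) set" where
  "cell N x = cbox (cell_center N x - (\<chi> i. 1 / (2 * real N)))
                   (cell_center N x + (\<chi> i. 1 / (2 * real N)))"

definition init_prob :: "nat \<Rightarrow> nat \<Rightarrow> (real ^ 'd \<Rightarrow> real) \<Rightarrow> ('d::finite \<Rightarrow> nat) \<Rightarrow> real" where
  "init_prob n N \<rho>0 x = real n * integral (cell N x) \<rho>0"

definition init_dist :: "nat \<Rightarrow> nat \<Rightarrow> (real ^ 'd \<Rightarrow> real) \<Rightarrow> (('d::finite \<Rightarrow> nat) \<Rightarrow> bool) \<Rightarrow> real" where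
  "init_dist n N \<rho>0 \<eta> = (\<Prod>x\<in>sites N. if \<eta> x then init_prob n N \<rho>0 x else 1 - init_prob n N \<rho>0 x)"

definition pair_functional :: "nat \<Rightarrow> nat \<Rightarrow> ('d \<Rightarrow> real ^ 'd \<Rightarrow> real)
    \<Rightarrow> (('d::finite \<Rightarrow> nat) \<Rightarrow> bool) \<Rightarrow> real" where
  "pair_functional n N \<phi> \<eta> = real N ^ CARD('d) / real n ^ 2 *
     (\<Sum>l\<in>UNIV. \<Sum>x\<in>sites N.
        (if \<eta> x \<and> \<eta> (x(l := (x l + 1) mod N)) then 1 else 0)
        * \<phi> l (cell_center N x + (1 / (2 * real N)) *\<^sub>R axis l 1))"

definition expected_pairing :: "nat \<Rightarrow> nat \<Rightarrow> (real ^ 'd \<Rightarrow> real) \<Rightarrow> ('d::finite \<Rightarrow> real ^ 'd \<Rightarrow> real)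
    \<Rightarrow> real \<Rightarrow> real" where
  "expected_pairing n N \<rho>0 \<phi> t =
     (\<Sum>\<eta>0\<in>configs N. init_dist n N \<rho>0 \<eta>0 * semigroup N t (pair_functional n N \<phi>) \<eta>0)"

text \<open>Continuous functions on the torus T^d = R^d/Z^d: continuous and Z^d-periodic.\<close>
definition torus_continuous :: "(real ^ 'd::finite \<Rightarrow> real) \<Rightarrow> bool" where
  "torus_continuous f \<longleftrightarrow> continuous_on UNIV f \<and> (\<forall>i y. f (y + axis i 1) = f y)"

definition sup_norm :: "(real ^ 'd::finite \<Rightarrow> real) \<Rightarrow> real" where
  "sup_norm f = Sup (range (\<lambda>y. \<bar>f y\<bar>))"

definition sup_norm2 :: "('d::finite \<Rightarrow> real ^ 'd \<Rightarrow> real) \<Rightarrow> real" where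
  "sup_norm2 \<phi> = Sup (range (\<lambda>(l, y). \<bar>\<phi> l y\<bar>))"

end

theory Submission
  imports Defs
begin

lemma finite_sites: "finite (sites N :: ('d::finite \<Rightarrow> nat) set)"
proof -
  have "sites N = (PiE (UNIV::'d set) (\<lambda>_. {..<N}))"
    by (auto simp: sites_def PiE_def Pi_def extensional_def)
  then show ?thesis by (simp add: finite_PiE)
qed

lemma card_sites: "card (sites N :: ('d::finite \<Rightarrow> nat) set) = N ^ CARD('d)"
proof -
  have "sites N = (PiE (UNIV::'d set) (\<lambda>_. {..<N}))"
    by (auto simp: sites_def PiE_def Pi_def extensional_def)
  then show ?thesis by (simp add: card_PiE)
qed

lemma finite_nbrs: "finite (nbrs N (x::'d::finite \<Rightarrow> nat))"
  unfolding nbrs_def by simp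

lemma card_nbrs: "card (nbrs N (x::'d::finite \<Rightarrow> nat)) \<le> 2 * CARD('d)"
proof -
  have "card (nbrs N x) \<le> card ((UNIV::'d set) \<times> {1, N - 1})"
    unfolding nbrs_def by (rule card_image_le) simp
  also have "\<dots> \<le> CARD('d) * 2"
    by (simp add: card_cartesian_product card_insert_le_m1)
  finally show ?thesis by simp
qed

lemma nbrs_sites: "N > 0 \<Longrightarrow> x \<in> sites N \<Longrightarrow> nbrs N x \<subseteq> sites N"
  unfolding nbrs_def sites_def by auto

lemma not_self_nbr: assumes "N \<ge> 2" "x \<in> sites N" shows "x \<notin> nbrs N x"
proof
  assume "x \<in> nbrs N x"
  then obtain l s where s: "s \<in> {1, N-1}" and e: "x = x(l := (x l + s) mod N)"
    unfolding nbrs_def by auto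
  have xl: "x l < N" using assms(2) by (simp add: sites_def)
  have "(x l + s) mod N = x l" using e by (metis fun_upd_same)
  then have "x l mod N = (x l + s) mod N" using xl by simp
  then have "N dvd (x l + s) - x l" using mod_eq_dvd_iff_nat[of "x l" "x l + s" N] by simp
  then have "N dvd s" by simp
  moreover have "0 < s" "s < N" using s assms(1) by auto
  ultimately show False using dvd_imp_le by fastforce
qed

lemma nbrs_sym: assumes "N \<ge> 2" "x \<in> sites N" "y \<in> nbrs N x" shows "x \<in> nbrs N y"
proof -
  obtain l s where s: "s \<in> {1, N-1}" and e: "y = x(l := (x l + s) mod N)"
    using assms(3) unfolding nbrs_def by auto
  have xl: "x l < N" using assms(2) by (simp add: sites_def)
  have sN: "s \<le> N" "N - s \<in> {1, N - 1}" using s assms(1) by auto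
  have "(y l + (N - s)) mod N = ((x l + s) mod N + (N - s)) mod N" using e by simp
  also have "\<dots> = (x l + s + (N - s)) mod N" by (simp add: mod_add_left_eq)
  also have "\<dots> = (x l + N) mod N" using sN by simp
  also have "\<dots> = x l" using xl by simp
  finally have eq: "x = y(l := (y l + (N - s)) mod N)" using e by auto
  show ?thesis unfolding nbrs_def
  proof (rule image_eqI[where x="(l, N - s)"])
    show "x = (\<lambda>(l, s). y(l := (y l + s) mod N)) (l, N - s)" using eq by simp
    show "(l, N - s) \<in> UNIV \<times> {1, N - 1}" using sN by simp
  qed
qed


definition Pset :: "nat \<Rightarrow> (('d::finite \<Rightarrow> nat) \<times> ('d \<Rightarrow> nat)) set" where
  "Pset N = {(a, b). a \<in> sites N \<and> b \<in> sites N \<and> a \<noteq> b}"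

definition Hf :: "('d \<Rightarrow> nat) \<times> ('d \<Rightarrow> nat) \<Rightarrow> (('d \<Rightarrow> nat) \<Rightarrow> bool) \<Rightarrow> real" where
  "Hf p \<eta> = (if \<eta> (fst p) \<and> \<eta> (snd p) then 1 else 0)"

definition Kop :: "nat \<Rightarrow> ((('d::finite \<Rightarrow> nat) \<times> ('d \<Rightarrow> nat)) \<Rightarrow> real)
   \<Rightarrow> (('d \<Rightarrow> nat) \<times> ('d \<Rightarrow> nat)) \<Rightarrow> real" where
  "Kop N g p = real N ^ 2 * (\<Sum>y\<in>nbrs N (fst p) - {snd p}. g (y, snd p) - g p)
             + real N ^ 2 * (\<Sum>y\<in>nbrs N (snd p) - {fst p}. g (fst p, y) - g p)"

definition lin :: "(('a \<Rightarrow> real) \<Rightarrow> ('a \<Rightarrow> real)) \<Rightarrow> bool" where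
  "lin T \<longleftrightarrow> (\<forall>f g. T (\<lambda>q. f q + g q) = (\<lambda>p. T f p + T g p))
     \<and> (\<forall>c f. T (\<lambda>q. c * f q) = (\<lambda>p. c * T f p))"

lemma lin_add: "lin T \<Longrightarrow> T (\<lambda>q. f q + g q) = (\<lambda>p. T f p + T g p)"
  unfolding lin_def by blast

lemma lin_scale: "lin T \<Longrightarrow> T (\<lambda>q. c * f q) = (\<lambda>p. c * T f p)"
  unfolding lin_def by blast

lemma lin_zero: "lin T \<Longrightarrow> T (\<lambda>q. 0) = (\<lambda>p. 0)"
  using lin_scale[of T 0 "\<lambda>q. 0"] by simp

lemma lin_diff: "lin T \<Longrightarrow> T (\<lambda>q. f q - g q) = (\<lambda>p. T f p - T g p)"
proof -
  assume l: "lin T"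
  have "T (\<lambda>q. f q - g q) = T (\<lambda>q. f q + (-1) * g q)" by simp
  also have "\<dots> = (\<lambda>p. T f p + (-1) * T g p)"
    using lin_add[OF l, of f "\<lambda>q. (-1) * g q"] lin_scale[OF l, of "-1" g] by simp
  finally show ?thesis by simp
qed

lemma lin_sum: assumes "lin T" "finite I"
  shows "T (\<lambda>q. \<Sum>i\<in>I. f i q) = (\<lambda>p. \<Sum>i\<in>I. T (f i) p)"
  using assms(2)
proof (induction I rule: finite_induct)
  case empty
  then show ?case using lin_zero[OF assms(1)] by simp
next
  case (insert x F)
  then show ?case using lin_add[OF assms(1), of "f x" "\<lambda>q. \<Sum>i\<in>F. f i q"] by simp
qed

lemma lin_funpow: "lin T \<Longrightarrow> lin (T ^^ k)"
proof (induction k)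
  case 0
  then show ?case by (simp add: lin_def)
next
  case (Suc k)
  then have l: "lin (T ^^ k)" by simp
  show ?case unfolding lin_def
    by (simp add: lin_add[OF l] lin_scale[OF l] lin_add[OF Suc.prems] lin_scale[OF Suc.prems])
qed

lemma lin_gen: "lin (gen N)"
proof -
  have a: "real N ^ 2 * (if c then f1 + g1 - (f0 + g0) else 0) =
     real N ^ 2 * (if c then f1 - f0 else 0) + real N ^ 2 * (if c then g1 - g0 else 0)"
    for c :: bool and f1 g1 f0 g0 :: real by (simp add: algebra_simps)
  have b: "real N ^ 2 * (if c' then k * f1 - k * f0 else 0) = k * (real N ^ 2 * (if c' then f1 - f0 else 0))"
    for c' :: bool and f1 f0 k :: real by (simp add: algebra_simps)
  show ?thesis unfolding lin_def gen_def
    by (simp add: a b sum.distrib sum_distrib_left fun_eq_iff)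
qed

lemma lin_Kop: "lin (Kop N)"
  unfolding lin_def Kop_def
  by (simp add: fun_eq_iff sum.distrib sum_subtractf sum_distrib_left algebra_simps)

lemma configs_upd: "\<eta> \<in> configs N \<Longrightarrow> x \<in> sites N \<Longrightarrow> y \<in> sites N \<Longrightarrow> \<eta>(x := u, y := v) \<in> configs N"
  unfolding configs_def by (auto simp: PiE_iff extensional_def)

lemma gen_cong: fixes \<eta> :: "('d::finite \<Rightarrow> nat) \<Rightarrow> bool" assumes "N > 0" "\<eta> \<in> configs N" "\<And>\<eta>'. \<eta>' \<in> configs N \<Longrightarrow> f \<eta>' = g \<eta>'"
  shows "gen N f \<eta> = gen N g \<eta>"
  unfolding gen_def
proof (intro sum.cong refl)
  fix x y :: "'d \<Rightarrow> nat" assume x: "x \<in> sites N" and y: "y \<in> nbrs N x"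
  have ys: "y \<in> sites N" using nbrs_sites[OF assms(1) x] y by auto
  show "real N ^ 2 * (if \<eta> x \<and> \<not> \<eta> y then f (\<eta>(x := False, y := True)) - f \<eta> else 0) =
        real N ^ 2 * (if \<eta> x \<and> \<not> \<eta> y then g (\<eta>(x := False, y := True)) - g \<eta> else 0)"
    using assms(3)[OF configs_upd[OF assms(2) x ys]] assms(3)[OF assms(2)] by simp
qed

lemma gen_commute: assumes "lin T"
  shows "gen N (\<lambda>\<eta>. T (\<lambda>q. G q \<eta>) p) \<eta> = T (\<lambda>q. gen N (G q) \<eta>) p"
proof -
  have c: "T (\<lambda>q. real N ^ 2 * (if c then A q - B q else 0)) p
      = real N ^ 2 * (if c then T A p - T B p else 0)" for c A B
    by (cases c) (simp_all add: lin_scale[OF assms] lin_diff[OF assms] lin_zero[OF assms])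
  show ?thesis unfolding gen_def
    by (simp add: lin_sum[OF assms] c finite_sites finite_nbrs)
qed


lemma sum_L1: fixes a :: "'d::finite \<Rightarrow> nat" assumes "a \<in> sites N"
  shows "(\<Sum>x\<in>sites N. \<Sum>y\<in>nbrs N x. if x = a \<and> P y then F y else (0::real))
       = (\<Sum>y\<in>nbrs N a. if P y then F y else 0)"
proof -
  have "(\<Sum>x\<in>sites N. \<Sum>y\<in>nbrs N x. if x = a \<and> P y then F y else (0::real))
      = (\<Sum>x\<in>sites N. if x = a then (\<Sum>y\<in>nbrs N a. if P y then F y else 0) else 0)"
    by (rule sum.cong) auto
  also have "\<dots> = (\<Sum>y\<in>nbrs N a. if P y then F y else 0)"
    using assms by (simp add: sum.delta finite_sites)
  finally show ?thesis .
qed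

lemma sum_L2: fixes a :: "'d::finite \<Rightarrow> nat" assumes "a \<in> sites N" "N \<ge> 2"
  shows "(\<Sum>x\<in>sites N. \<Sum>y\<in>nbrs N x. if y = a \<and> P x then F x else (0::real))
       = (\<Sum>x\<in>nbrs N a. if P x then F x else 0)"
proof -
  have "(\<Sum>x\<in>sites N. \<Sum>y\<in>nbrs N x. if y = a \<and> P x then F x else (0::real))
      = (\<Sum>x\<in>sites N. if a \<in> nbrs N x then (if P x then F x else 0) else 0)"
  proof (rule sum.cong)
    fix x :: "'d \<Rightarrow> nat" assume "x \<in> sites N"
    have "(\<Sum>y\<in>nbrs N x. if y = a \<and> P x then F x else (0::real))
       = (\<Sum>y\<in>nbrs N x. if y = a then (if P x then F x else 0) else 0)"
      by (rule sum.cong) auto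
    also have "\<dots> = (if a \<in> nbrs N x then (if P x then F x else 0) else 0)"
      by (simp add: sum.delta' finite_nbrs)
    finally show "(\<Sum>y\<in>nbrs N x. if y = a \<and> P x then F x else (0::real))
       = (if a \<in> nbrs N x then (if P x then F x else 0) else 0)" .
  qed simp
  also have "\<dots> = (\<Sum>x\<in>{x\<in>sites N. a \<in> nbrs N x}. if P x then F x else 0)"
    by (simp add: sum.inter_filter finite_sites)
  also have "{x\<in>sites N. a \<in> nbrs N x} = nbrs N a"
  proof -
    have "N > 0" using assms by simp
    then show ?thesis
      using nbrs_sym[OF assms(2)] nbrs_sites[of N] assms(1) by blast
  qed
  finally show ?thesis .
qed

lemma diff_singleton_sum: "finite A \<Longrightarrow> (\<Sum>y\<in>A - {b}. f y) = (\<Sum>y\<in>A. if y \<noteq> b then f y else (0::real))"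
proof -
  assume "finite A"
  moreover have "A - {b} = {y\<in>A. y \<noteq> b}" by auto
  ultimately show ?thesis by (simp add: sum.inter_filter)
qed

lemma gen_Hf: fixes \<eta> :: "('d::finite \<Rightarrow> nat) \<Rightarrow> bool" and a b :: "'d \<Rightarrow> nat"
  assumes N2: "N \<ge> 2" and eta: "\<eta> \<in> configs N" and p: "(a, b) \<in> Pset N"
  shows "gen N (Hf (a, b)) \<eta> = Kop N (\<lambda>q. Hf q \<eta>) (a, b)"
proof -
  have a: "a \<in> sites N" and b: "b \<in> sites N" and ab: "a \<noteq> b" using p by (auto simp: Pset_def)
  define D where "D y = (if \<eta> a \<and> \<eta> b \<and> \<not> \<eta> y then 1 else 0 :: real)" for y
  define U1 where "U1 x = (if \<eta> x \<and> \<not> \<eta> a \<and> \<eta> b then 1 else 0 :: real)" for x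
  define U2 where "U2 x = (if \<eta> x \<and> \<not> \<eta> b \<and> \<eta> a then 1 else 0 :: real)" for x
  have pt: "(if \<eta> x \<and> \<not> \<eta> y then Hf (a, b) (\<eta>(x := False, y := True)) - Hf (a, b) \<eta> else 0)
     = (if x = a \<and> y \<noteq> b then - D y else 0) + (if x = b \<and> y \<noteq> a then - D y else 0)
       + (if y = a \<and> x \<noteq> b then U1 x else 0) + (if y = b \<and> x \<noteq> a then U2 x else 0)"
    if "x \<noteq> y" for x y
    using that ab unfolding Hf_def D_def U1_def U2_def
    by (cases "x = a"; cases "y = b"; cases "x = b"; cases "y = a"; cases "\<eta> x"; cases "\<eta> y"; cases "\<eta> a"; cases "\<eta> b") simp_all
  have step1: "gen N (Hf (a, b)) \<eta> = real N ^ 2 * (\<Sum>x\<in>sites N. \<Sum>y\<in>nbrs N x.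
       (if x = a \<and> y \<noteq> b then - D y else 0) + (if x = b \<and> y \<noteq> a then - D y else 0)
       + (if y = a \<and> x \<noteq> b then U1 x else 0) + (if y = b \<and> x \<noteq> a then U2 x else 0))"
    unfolding gen_def sum_distrib_left
  proof (intro sum.cong refl)
    fix x y :: "'d \<Rightarrow> nat" assume x: "x \<in> sites N" and y: "y \<in> nbrs N x"
    then have "x \<noteq> y" using not_self_nbr[OF N2 x] by auto
    then show "real N ^ 2 * (if \<eta> x \<and> \<not> \<eta> y then Hf (a, b) (\<eta>(x := False, y := True)) - Hf (a, b) \<eta> else 0)
      = real N ^ 2 * ((if x = a \<and> y \<noteq> b then - D y else 0) + (if x = b \<and> y \<noteq> a then - D y else 0)
       + (if y = a \<and> x \<noteq> b then U1 x else 0) + (if y = b \<and> x \<noteq> a then U2 x else 0))"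
      using pt by simp
  qed
  have s1: "(\<Sum>x\<in>sites N. \<Sum>y\<in>nbrs N x. if x = a \<and> y \<noteq> b then - D y else 0) = (\<Sum>y\<in>nbrs N a. if y \<noteq> b then - D y else 0)"
    by (rule sum_L1[OF a])
  have s2: "(\<Sum>x\<in>sites N. \<Sum>y\<in>nbrs N x. if x = b \<and> y \<noteq> a then - D y else 0) = (\<Sum>y\<in>nbrs N b. if y \<noteq> a then - D y else 0)"
    by (rule sum_L1[OF b])
  have s3: "(\<Sum>x\<in>sites N. \<Sum>y\<in>nbrs N x. if y = a \<and> x \<noteq> b then U1 x else 0) = (\<Sum>x\<in>nbrs N a. if x \<noteq> b then U1 x else 0)"
    by (rule sum_L2[OF a N2])
  have s4: "(\<Sum>x\<in>sites N. \<Sum>y\<in>nbrs N x. if y = b \<and> x \<noteq> a then U2 x else 0) = (\<Sum>x\<in>nbrs N b. if x \<noteq> a then U2 x else 0)"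
    by (rule sum_L2[OF b N2])
  have step2: "(\<Sum>x\<in>sites N. \<Sum>y\<in>nbrs N x.
       (if x = a \<and> y \<noteq> b then - D y else 0) + (if x = b \<and> y \<noteq> a then - D y else 0)
       + (if y = a \<and> x \<noteq> b then U1 x else 0) + (if y = b \<and> x \<noteq> a then U2 x else 0))
     = (\<Sum>y\<in>nbrs N a. if y \<noteq> b then - D y else 0) + (\<Sum>y\<in>nbrs N b. if y \<noteq> a then - D y else 0)
     + (\<Sum>x\<in>nbrs N a. if x \<noteq> b then U1 x else 0) + (\<Sum>x\<in>nbrs N b. if x \<noteq> a then U2 x else 0)"
    unfolding sum.distrib s1 s2 s3 s4 ..
  have e1: "Hf (y, b) \<eta> - Hf (a, b) \<eta> = (if y \<noteq> b then U1 y else 0) + (if y \<noteq> b then - D y else 0)" if "y \<noteq> b" for y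
    using that by (auto simp: Hf_def D_def U1_def)
  have e2: "Hf (a, y) \<eta> - Hf (a, b) \<eta> = (if y \<noteq> a then U2 y else 0) + (if y \<noteq> a then - D y else 0)" if "y \<noteq> a" for y
    using that by (auto simp: Hf_def D_def U2_def)
  have k1: "(\<Sum>y\<in>nbrs N a - {b}. Hf (y, b) \<eta> - Hf (a, b) \<eta>)
     = (\<Sum>y\<in>nbrs N a. if y \<noteq> b then U1 y else 0) + (\<Sum>y\<in>nbrs N a. if y \<noteq> b then - D y else 0)"
  proof -
    have "(\<Sum>y\<in>nbrs N a - {b}. Hf (y, b) \<eta> - Hf (a, b) \<eta>)
        = (\<Sum>y\<in>nbrs N a - {b}. (if y \<noteq> b then U1 y else 0) + (if y \<noteq> b then - D y else 0))"
      by (rule sum.cong) (use e1 in auto)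
    also have "\<dots> = (\<Sum>y\<in>nbrs N a. (if y \<noteq> b then U1 y else 0) + (if y \<noteq> b then - D y else 0))"
      by (rule sum.mono_neutral_left) (auto simp: finite_nbrs)
    finally show ?thesis by (simp only: sum.distrib)
  qed
  have k2: "(\<Sum>y\<in>nbrs N b - {a}. Hf (a, y) \<eta> - Hf (a, b) \<eta>)
     = (\<Sum>y\<in>nbrs N b. if y \<noteq> a then U2 y else 0) + (\<Sum>y\<in>nbrs N b. if y \<noteq> a then - D y else 0)"
  proof -
    have "(\<Sum>y\<in>nbrs N b - {a}. Hf (a, y) \<eta> - Hf (a, b) \<eta>)
        = (\<Sum>y\<in>nbrs N b - {a}. (if y \<noteq> a then U2 y else 0) + (if y \<noteq> a then - D y else 0))"
      by (rule sum.cong) (use e2 in auto)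
    also have "\<dots> = (\<Sum>y\<in>nbrs N b. (if y \<noteq> a then U2 y else 0) + (if y \<noteq> a then - D y else 0))"
      by (rule sum.mono_neutral_left) (auto simp: finite_nbrs)
    finally show ?thesis by (simp only: sum.distrib)
  qed
  have "Kop N (\<lambda>q. Hf q \<eta>) (a, b) = real N ^ 2 * (\<Sum>y\<in>nbrs N a - {b}. Hf (y, b) \<eta> - Hf (a, b) \<eta>)
     + real N ^ 2 * (\<Sum>y\<in>nbrs N b - {a}. Hf (a, y) \<eta> - Hf (a, b) \<eta>)"
    unfolding Kop_def by simp
  then show ?thesis unfolding step1 step2 k1 k2 by (simp only: ring_distribs add_ac)
qed

lemma Kop_cong: assumes "\<And>q. q \<in> Pset N \<Longrightarrow> f q = g q" "p \<in> Pset N" "N > 0"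
  shows "Kop N f p = Kop N g p"
proof -
  obtain a b where p: "p = (a, b)" by (cases p)
  have a: "a \<in> sites N" and b: "b \<in> sites N" and ab: "a \<noteq> b" using assms(2) p by (auto simp: Pset_def)
  have 1: "(\<Sum>y\<in>nbrs N a - {b}. f (y, b) - f (a, b)) = (\<Sum>y\<in>nbrs N a - {b}. g (y, b) - g (a, b))"
  proof (rule sum.cong)
    fix y assume "y \<in> nbrs N a - {b}"
    then have "(y, b) \<in> Pset N" using nbrs_sites[OF assms(3) a] b by (auto simp: Pset_def)
    then show "f (y, b) - f (a, b) = g (y, b) - g (a, b)" using assms(1) assms(2) p by simp
  qed simp
  have 2: "(\<Sum>y\<in>nbrs N b - {a}. f (a, y) - f (a, b)) = (\<Sum>y\<in>nbrs N b - {a}. g (a, y) - g (a, b))"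
  proof (rule sum.cong)
    fix y assume "y \<in> nbrs N b - {a}"
    then have "(a, y) \<in> Pset N" using nbrs_sites[OF assms(3) b] a by (auto simp: Pset_def)
    then show "f (a, y) - f (a, b) = g (a, y) - g (a, b)" using assms(1) assms(2) p by simp
  qed simp
  show ?thesis unfolding Kop_def p using 1 2 by simp
qed

lemma Kop_funpow_cong: assumes "\<And>q. q \<in> Pset N \<Longrightarrow> f q = g q" "N > 0"
  shows "p \<in> Pset N \<Longrightarrow> (Kop N ^^ k) f p = (Kop N ^^ k) g p"
proof (induction k arbitrary: p)
  case 0
  then show ?case using assms by simp
next
  case (Suc k)
  have "Kop N ((Kop N ^^ k) f) p = Kop N ((Kop N ^^ k) g) p"
    by (rule Kop_cong[OF _ Suc.prems assms(2)]) (rule Suc.IH)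
  then show ?case by simp
qed

lemma duality: fixes \<eta> :: "('d::finite \<Rightarrow> nat) \<Rightarrow> bool" assumes N2: "N \<ge> 2"
  shows "\<eta> \<in> configs N \<Longrightarrow> p \<in> Pset N \<Longrightarrow> (gen N ^^ k) (Hf p) \<eta> = (Kop N ^^ k) (\<lambda>q. Hf q \<eta>) p"
proof (induction k arbitrary: \<eta> p)
  case 0
  then show ?case by simp
next
  case (Suc k)
  have N0: "N > 0" using N2 by simp
  have "(gen N ^^ Suc k) (Hf p) \<eta> = gen N ((gen N ^^ k) (Hf p)) \<eta>" by simp
  also have "\<dots> = gen N (\<lambda>\<eta>'. (Kop N ^^ k) (\<lambda>q. Hf q \<eta>') p) \<eta>"
    by (rule gen_cong[OF N0 Suc.prems(1)]) (use Suc.IH Suc.prems(2) in auto)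
  also have "\<dots> = (Kop N ^^ k) (\<lambda>q. gen N (Hf q) \<eta>) p"
    by (rule gen_commute[OF lin_funpow[OF lin_Kop]])
  also have "\<dots> = (Kop N ^^ k) (Kop N (\<lambda>q. Hf q \<eta>)) p"
  proof (rule Kop_funpow_cong[OF _ N0 Suc.prems(2)])
    fix q :: "('d \<Rightarrow> nat) \<times> ('d \<Rightarrow> nat)" assume q: "q \<in> Pset N"
    obtain a b where "q = (a, b)" by (cases q)
    then show "gen N (Hf q) \<eta> = Kop N (\<lambda>q. Hf q \<eta>) q" using gen_Hf[OF N2 Suc.prems(1)] q by simp
  qed
  also have "\<dots> = (Kop N ^^ Suc k) (\<lambda>q. Hf q \<eta>) p" by (simp add: funpow_Suc_right del: funpow.simps)
  finally show ?case .
qed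


lemma binom_seq:
  fixes u :: "nat \<Rightarrow> real" and c :: real
  shows "(\<Sum>k\<le>n. of_nat (n choose k) * (-c)^k * u (Suc (n - k)))
       - c * (\<Sum>k\<le>n. of_nat (n choose k) * (-c)^k * u (n - k))
     = (\<Sum>k\<le>Suc n. of_nat (Suc n choose k) * (-c)^k * u (Suc n - k))"
proof -
  have L1: "(\<Sum>k\<le>n. of_nat (n choose k) * (-c)^k * u (Suc (n - k)))
      = (\<Sum>k\<le>Suc n. of_nat (n choose k) * (-c)^k * u (Suc n - k))"
  proof -
    have "(\<Sum>k\<le>n. of_nat (n choose k) * (-c)^k * u (Suc (n - k)))
        = (\<Sum>k\<le>n. of_nat (n choose k) * (-c)^k * u (Suc n - k))"
      by (rule sum.cong) (auto simp: Suc_diff_le)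
    then show ?thesis by simp
  qed
  also have "\<dots> = u (Suc n) + (\<Sum>k\<le>n. of_nat (n choose Suc k) * (-c)^Suc k * u (n - k))"
    by (subst sum.atMost_Suc_shift) simp
  finally have L1': "(\<Sum>k\<le>n. of_nat (n choose k) * (-c)^k * u (Suc (n - k)))
      = u (Suc n) + (\<Sum>k\<le>n. of_nat (n choose Suc k) * (-c)^Suc k * u (n - k))" .
  have L2: "c * (\<Sum>k\<le>n. of_nat (n choose k) * (-c)^k * u (n - k))
     = - (\<Sum>k\<le>n. of_nat (n choose k) * (-c)^Suc k * u (n - k))"
    by (simp add: sum_distrib_left sum_negf[symmetric] algebra_simps)
  have R: "(\<Sum>k\<le>Suc n. of_nat (Suc n choose k) * (-c)^k * u (Suc n - k))
     = u (Suc n) + (\<Sum>k\<le>n. of_nat (n choose k) * (-c)^Suc k * u (n - k))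
                 + (\<Sum>k\<le>n. of_nat (n choose Suc k) * (-c)^Suc k * u (n - k))"
    by (subst sum.atMost_Suc_shift) (simp add: sum.distrib algebra_simps sum_subtractf sum_negf)
  show ?thesis using L1' L2 R by simp
qed

lemma binom_op:
  assumes l: "lin Q"
  shows "((\<lambda>h p. Q h p - c * h p) ^^ n) g
       = (\<lambda>p. \<Sum>k\<le>n. of_nat (n choose k) * (-c)^k * (Q ^^ (n - k)) g p)"
proof (induction n)
  case 0
  then show ?case by simp
next
  case (Suc n)
  have ln: "lin (Q ^^ j)" for j using lin_funpow[OF l] .
  have "((\<lambda>h p. Q h p - c * h p) ^^ Suc n) g
      = (\<lambda>p. Q (\<lambda>p. \<Sum>k\<le>n. of_nat (n choose k) * (-c)^k * (Q ^^ (n - k)) g p) p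
             - c * (\<Sum>k\<le>n. of_nat (n choose k) * (-c)^k * (Q ^^ (n - k)) g p))"
    using Suc.IH by simp
  also have "\<dots> = (\<lambda>p. (\<Sum>k\<le>n. of_nat (n choose k) * (-c)^k * (Q ^^ Suc (n - k)) g p)
             - c * (\<Sum>k\<le>n. of_nat (n choose k) * (-c)^k * (Q ^^ (n - k)) g p))"
    by (simp add: lin_sum[OF l] lin_scale[OF l] mult.assoc)
  also have "\<dots> = (\<lambda>p. \<Sum>k\<le>Suc n. of_nat (Suc n choose k) * (-c)^k * (Q ^^ (Suc n - k)) g p)"
    using binom_seq[of n c "\<lambda>j. (Q ^^ j) g _"] by simp
  finally show ?case .
qed


lemma exp_real_sums: "(\<lambda>n. x^n / fact n) sums exp (x::real)"
  using exp_converges[of x] by (simp add: divide_inverse mult.commute)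

lemma Qpow_bound:
  fixes Q :: "('p \<Rightarrow> real) \<Rightarrow> 'p \<Rightarrow> real"
  assumes bnd: "\<And>g B. \<forall>q\<in>P. \<bar>g q\<bar> \<le> B \<Longrightarrow> \<forall>p\<in>P. \<bar>Q g p\<bar> \<le> c * B"
    and gB: "\<forall>q\<in>P. \<bar>g q\<bar> \<le> B"
  shows "\<forall>p\<in>P. \<bar>(Q ^^ j) g p\<bar> \<le> c ^ j * B"
proof (induction j)
  case 0
  then show ?case using gB by simp
next
  case (Suc j)
  then show ?case using bnd[of "(Q ^^ j) g" "c ^ j * B"] by (simp add: mult.assoc)
qed

lemma Qpow_pos:
  fixes Q :: "('p \<Rightarrow> real) \<Rightarrow> 'p \<Rightarrow> real"
  assumes pos: "\<And>g B. \<forall>q\<in>P. 0 \<le> g q \<and> g q \<le> B \<Longrightarrow> \<forall>p\<in>P. 0 \<le> Q g p \<and> Q g p \<le> c * B"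
    and gB: "\<forall>q\<in>P. 0 \<le> g q \<and> g q \<le> B"
  shows "\<forall>p\<in>P. 0 \<le> (Q ^^ j) g p \<and> (Q ^^ j) g p \<le> c ^ j * B"
proof (induction j)
  case 0
  then show ?case using gB by simp
next
  case (Suc j)
  then show ?case using pos[of "(Q ^^ j) g" "c ^ j * B"] by (simp add: mult.assoc)
qed

lemma series_main:
  fixes Q :: "('p \<Rightarrow> real) \<Rightarrow> 'p \<Rightarrow> real"
  assumes l: "lin Q"
    and bnd: "\<And>g B. \<forall>q\<in>P. \<bar>g q\<bar> \<le> B \<Longrightarrow> \<forall>p\<in>P. \<bar>Q g p\<bar> \<le> c * B"
    and c0: "c \<ge> 0" and p: "p \<in> P" and gB: "\<forall>q\<in>P. \<bar>g q\<bar> \<le> B"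
  shows "(\<lambda>n. t^n / fact n * (((\<lambda>h p. Q h p - c * h p) ^^ n) g p))
           sums (exp (-c*t) * (\<Sum>j. t^j / fact j * (Q ^^ j) g p))"
proof -
  define a where "a i = (-c*t)^i / fact i" for i
  define b where "b j = t^j / fact j * (Q ^^ j) g p" for j
  have sa: "summable (\<lambda>k. norm (a k))"
  proof -
    have "summable (\<lambda>k. \<bar>-c*t\<bar>^k / fact k)" using exp_real_sums sums_summable by blast
    moreover have "norm (a k) = \<bar>-c*t\<bar>^k / fact k" for k
      by (simp add: a_def abs_mult power_abs)
    ultimately show ?thesis by simp
  qed
  have sb: "summable (\<lambda>k. norm (b k))"
  proof (rule summable_comparison_test)
    show "summable (\<lambda>k. (c * \<bar>t\<bar>)^k / fact k * B)"
      using exp_real_sums sums_summable summable_mult2 by blast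
    show "\<exists>N. \<forall>n\<ge>N. norm (norm (b n)) \<le> (c * \<bar>t\<bar>)^n / fact n * B"
    proof (intro exI allI impI)
      fix n :: nat
      have "\<bar>(Q ^^ n) g p\<bar> \<le> c ^ n * B" using Qpow_bound[where P=P and Q=Q and c=c, OF bnd gB] p by blast
      then have "\<bar>t\<bar>^n / fact n * \<bar>(Q ^^ n) g p\<bar> \<le> \<bar>t\<bar>^n / fact n * (c ^ n * B)"
        by (rule mult_left_mono) simp
      then show "norm (norm (b n)) \<le> (c * \<bar>t\<bar>)^n / fact n * B"
        by (simp add: b_def abs_mult power_abs power_mult_distrib algebra_simps)
    qed
  qed
  have suma: "suminf a = exp (-c*t)"
    using exp_real_sums[of "-c*t"] unfolding a_def[abs_def] by (simp add: sums_iff)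
  have cp: "(\<lambda>k. \<Sum>i\<le>k. a i * b (k - i)) sums (suminf a * suminf b)"
    by (rule Cauchy_product_sums[OF sa sb])
  have eq: "(\<Sum>i\<le>n. a i * b (n - i)) = t^n / fact n * (((\<lambda>h p. Q h p - c * h p) ^^ n) g p)" for n
  proof -
    have "t^n / fact n * (((\<lambda>h p. Q h p - c * h p) ^^ n) g p)
        = (\<Sum>i\<le>n. t^n / fact n * (of_nat (n choose i) * (-c)^i * (Q ^^ (n - i)) g p))"
      by (simp add: binom_op[OF l] sum_distrib_left)
    also have "\<dots> = (\<Sum>i\<le>n. a i * b (n - i))"
    proof (rule sum.cong)
      fix i assume "i \<in> {..n}"
      then have i: "i \<le> n" by simp
      have tn: "t^n = t^i * t^(n-i)" using i by (simp add: power_add[symmetric])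
      have ct: "(-c*t)^i = (-c)^i * t^i" by (rule power_mult_distrib)
      show "t^n / fact n * (of_nat (n choose i) * (-c)^i * (Q ^^ (n - i)) g p) = a i * b (n - i)"
        unfolding a_def b_def tn binomial_fact[OF i] ct
        by (simp add: power_mult_distrib field_simps)
    qed simp
    finally show ?thesis by simp
  qed
  have fe: "(\<lambda>k. \<Sum>i\<le>k. a i * b (k - i)) = (\<lambda>n. t^n / fact n * (((\<lambda>h p. Q h p - c * h p) ^^ n) g p))"
    by (rule ext) (rule eq)
  have sb': "suminf b = (\<Sum>j. t^j / fact j * (Q ^^ j) g p)" unfolding b_def[abs_def] ..
  show ?thesis using cp unfolding fe suma sb' .
qed

lemma series_bound:
  fixes Q :: "('p \<Rightarrow> real) \<Rightarrow> 'p \<Rightarrow> real"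
  assumes pos: "\<And>g B. \<forall>q\<in>P. 0 \<le> g q \<and> g q \<le> B \<Longrightarrow> \<forall>p\<in>P. 0 \<le> Q g p \<and> Q g p \<le> c * B"
    and c0: "c \<ge> 0" and t0: "t \<ge> 0" and p: "p \<in> P" and gB: "\<forall>q\<in>P. 0 \<le> g q \<and> g q \<le> B"
  shows "0 \<le> exp (-c*t) * (\<Sum>j. t^j / fact j * (Q ^^ j) g p)
       \<and> exp (-c*t) * (\<Sum>j. t^j / fact j * (Q ^^ j) g p) \<le> B"
proof -
  define f where "f j = t^j / fact j * (Q ^^ j) g p" for j
  have fb: "0 \<le> f j \<and> f j \<le> (c*t)^j / fact j * B" for j
  proof -
    have h: "0 \<le> (Q ^^ j) g p \<and> (Q ^^ j) g p \<le> c ^ j * B" using Qpow_pos[where P=P and Q=Q and c=c, OF pos gB] p by blast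
    have h2: "0 \<le> t^j / fact j" using t0 by simp
    have "0 \<le> t^j / fact j * (Q ^^ j) g p" using h h2 by (intro mult_nonneg_nonneg) auto
    moreover have "t^j / fact j * (Q ^^ j) g p \<le> t^j / fact j * (c ^ j * B)"
      using h h2 by (intro mult_left_mono) auto
    ultimately have "0 \<le> t^j / fact j * (Q ^^ j) g p \<and> t^j / fact j * (Q ^^ j) g p \<le> t^j / fact j * (c ^ j * B)"
      by blast
    then show ?thesis by (simp add: f_def power_mult_distrib algebra_simps)
  qed
  have se: "(\<lambda>j. (c*t)^j / fact j * B) sums (exp (c*t) * B)"
    using exp_real_sums sums_mult2 by blast
  have sf: "summable f"
    by (rule summable_comparison_test[OF _ sums_summable[OF se]]) (use fb in auto)
  have "0 \<le> suminf f" using fb sf by (simp add: suminf_nonneg)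
  moreover have "suminf f \<le> exp (c*t) * B"
    using suminf_le[OF _ sf sums_summable[OF se]] fb sums_unique[OF se] by auto
  ultimately have 1: "0 \<le> exp (-c*t) * suminf f" and 2: "exp (-c*t) * suminf f \<le> exp (-c*t) * (exp (c*t) * B)"
    by (simp_all add: mult_left_mono)
  have 3: "exp (-c*t) * (exp (c*t) * B) = B"
    by (simp add: exp_minus field_simps)
  show ?thesis using 1 2 unfolding 3 f_def[abs_def] by simp
qed


definition Qop :: "nat \<Rightarrow> ((('d::finite \<Rightarrow> nat) \<times> ('d \<Rightarrow> nat)) \<Rightarrow> real)
   \<Rightarrow> (('d \<Rightarrow> nat) \<times> ('d \<Rightarrow> nat)) \<Rightarrow> real" where
  "Qop N g p = Kop N g p + 4 * real CARD('d) * real N ^ 2 * g p"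

lemma lin_Qop: "lin (Qop N)"
  using lin_Kop[of N] unfolding lin_def Qop_def by (simp add: fun_eq_iff algebra_simps)

lemma Kop_eq: "(Kop N :: (('d::finite \<Rightarrow> nat) \<times> ('d \<Rightarrow> nat) \<Rightarrow> real) \<Rightarrow> _)
   = (\<lambda>h p. Qop N h p - 4 * real CARD('d) * real N ^ 2 * h p)"
  by (simp add: Qop_def fun_eq_iff)

lemma Qop_expand:
  fixes g :: "('d::finite \<Rightarrow> nat) \<times> ('d \<Rightarrow> nat) \<Rightarrow> real"
  shows "Qop N g (a, b) = real N ^ 2 * (\<Sum>y\<in>nbrs N a - {b}. g (y, b)) + real N ^ 2 * (\<Sum>y\<in>nbrs N b - {a}. g (a, y))
     + (4 * real CARD('d) * real N ^ 2 - real N ^ 2 * real (card (nbrs N a - {b})) - real N ^ 2 * real (card (nbrs N b - {a}))) * g (a, b)"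
  unfolding Qop_def Kop_def by (simp add: sum_subtractf algebra_simps)

lemma card_nbrs_diff: "real (card (nbrs N (a::'d::finite \<Rightarrow> nat) - {b})) \<le> 2 * real CARD('d)"
proof -
  have "card (nbrs N a - {b}) \<le> card (nbrs N a)" by (rule card_mono) (auto simp: finite_nbrs)
  then have "card (nbrs N a - {b}) \<le> 2 * CARD('d)" using card_nbrs[of N a] by linarith
  then show ?thesis by linarith
qed

lemma Qop_bnd:
  fixes g :: "('d::finite \<Rightarrow> nat) \<times> ('d \<Rightarrow> nat) \<Rightarrow> real"
  assumes N0: "N > 0" and gB: "\<forall>q\<in>Pset N. \<bar>g q\<bar> \<le> B"
  shows "\<forall>p\<in>Pset N. \<bar>Qop N g p\<bar> \<le> (4 * real CARD('d) * real N ^ 2) * B"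
proof
  fix p :: "('d \<Rightarrow> nat) \<times> ('d \<Rightarrow> nat)" assume p: "p \<in> Pset N"
  obtain a b :: "'d \<Rightarrow> nat" where pab: "p = (a, b)" by (cases p)
  have a: "a \<in> sites N" and b: "b \<in> sites N" and ab: "a \<noteq> b" using p pab by (auto simp: Pset_def)
  define A where "A = nbrs N a - {b}"
  define B' where "B' = nbrs N b - {a}"
  have fA: "finite A" "finite B'" by (auto simp: A_def B'_def finite_nbrs)
  have inA: "(y, b) \<in> Pset N" if "y \<in> A" for y
    using that nbrs_sites[OF N0 a] b by (auto simp: A_def Pset_def)
  have inB: "(a, y) \<in> Pset N" if "y \<in> B'" for y
    using that nbrs_sites[OF N0 b] a by (auto simp: B'_def Pset_def)
  have gp: "\<bar>g (a, b)\<bar> \<le> B" using gB p pab by auto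
  have s1: "\<bar>\<Sum>y\<in>A. g (y, b)\<bar> \<le> real (card A) * B"
  proof -
    have "\<bar>\<Sum>y\<in>A. g (y, b)\<bar> \<le> (\<Sum>y\<in>A. \<bar>g (y, b)\<bar>)" by (rule sum_abs)
    also have "\<dots> \<le> (\<Sum>y\<in>A. B)" by (rule sum_mono) (use gB inA in auto)
    finally show ?thesis by simp
  qed
  have s2: "\<bar>\<Sum>y\<in>B'. g (a, y)\<bar> \<le> real (card B') * B"
  proof -
    have "\<bar>\<Sum>y\<in>B'. g (a, y)\<bar> \<le> (\<Sum>y\<in>B'. \<bar>g (a, y)\<bar>)" by (rule sum_abs)
    also have "\<dots> \<le> (\<Sum>y\<in>B'. B)" by (rule sum_mono) (use gB inB in auto)
    finally show ?thesis by simp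
  qed
  have cA: "real (card A) \<le> 2 * real CARD('d)" "real (card B') \<le> 2 * real CARD('d)"
    unfolding A_def B'_def by (rule card_nbrs_diff)+
  define K0 where "K0 = 4 * real CARD('d) * real N ^ 2 - real N ^ 2 * real (card A) - real N ^ 2 * real (card B')"
  have K0: "K0 \<ge> 0"
  proof -
    have "real N ^ 2 * real (card A) \<le> real N ^ 2 * (2 * real CARD('d))" by (rule mult_left_mono) (use cA in auto)
    moreover have "real N ^ 2 * real (card B') \<le> real N ^ 2 * (2 * real CARD('d))" by (rule mult_left_mono) (use cA in auto)
    ultimately show ?thesis unfolding K0_def by (simp add: algebra_simps)
  qed
  have e: "Qop N g p = real N ^ 2 * (\<Sum>y\<in>A. g (y, b)) + real N ^ 2 * (\<Sum>y\<in>B'. g (a, y)) + K0 * g (a, b)"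
    unfolding pab Qop_expand A_def B'_def K0_def ..
  have "\<bar>Qop N g p\<bar> \<le> real N ^ 2 * \<bar>\<Sum>y\<in>A. g (y, b)\<bar> + real N ^ 2 * \<bar>\<Sum>y\<in>B'. g (a, y)\<bar> + K0 * \<bar>g (a, b)\<bar>"
    unfolding e using K0 by (simp add: abs_mult order_trans[OF abs_triangle_ineq add_mono])
  also have "\<dots> \<le> real N ^ 2 * (real (card A) * B) + real N ^ 2 * (real (card B') * B) + K0 * B"
    by (intro add_mono mult_left_mono s1 s2 gp K0) simp_all
  also have "\<dots> = (4 * real CARD('d) * real N ^ 2) * B" unfolding K0_def by (simp add: algebra_simps)
  finally show "\<bar>Qop N g p\<bar> \<le> (4 * real CARD('d) * real N ^ 2) * B" .
qed

lemma Qop_pos: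
  fixes g :: "('d::finite \<Rightarrow> nat) \<times> ('d \<Rightarrow> nat) \<Rightarrow> real"
  assumes N0: "N > 0" and gB: "\<forall>q\<in>Pset N. 0 \<le> g q \<and> g q \<le> B"
  shows "\<forall>p\<in>Pset N. 0 \<le> Qop N g p \<and> Qop N g p \<le> (4 * real CARD('d) * real N ^ 2) * B"
proof
  fix p :: "('d \<Rightarrow> nat) \<times> ('d \<Rightarrow> nat)" assume p: "p \<in> Pset N"
  obtain a b :: "'d \<Rightarrow> nat" where pab: "p = (a, b)" by (cases p)
  have a: "a \<in> sites N" and b: "b \<in> sites N" and ab: "a \<noteq> b" using p pab by (auto simp: Pset_def)
  define A where "A = nbrs N a - {b}"
  define B' where "B' = nbrs N b - {a}"
  have inA: "(y, b) \<in> Pset N" if "y \<in> A" for y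
    using that nbrs_sites[OF N0 a] b by (auto simp: A_def Pset_def)
  have inB: "(a, y) \<in> Pset N" if "y \<in> B'" for y
    using that nbrs_sites[OF N0 b] a by (auto simp: B'_def Pset_def)
  have gp: "0 \<le> g (a, b)" "g (a, b) \<le> B" using gB p pab by auto
  have s1: "0 \<le> (\<Sum>y\<in>A. g (y, b))" "(\<Sum>y\<in>A. g (y, b)) \<le> real (card A) * B"
  proof -
    show "0 \<le> (\<Sum>y\<in>A. g (y, b))" by (rule sum_nonneg) (use gB inA in auto)
    have "(\<Sum>y\<in>A. g (y, b)) \<le> (\<Sum>y\<in>A. B)" by (rule sum_mono) (use gB inA in auto)
    then show "(\<Sum>y\<in>A. g (y, b)) \<le> real (card A) * B" by simp
  qed
  have s2: "0 \<le> (\<Sum>y\<in>B'. g (a, y))" "(\<Sum>y\<in>B'. g (a, y)) \<le> real (card B') * B"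
  proof -
    show "0 \<le> (\<Sum>y\<in>B'. g (a, y))" by (rule sum_nonneg) (use gB inB in auto)
    have "(\<Sum>y\<in>B'. g (a, y)) \<le> (\<Sum>y\<in>B'. B)" by (rule sum_mono) (use gB inB in auto)
    then show "(\<Sum>y\<in>B'. g (a, y)) \<le> real (card B') * B" by simp
  qed
  have cA: "real (card A) \<le> 2 * real CARD('d)" "real (card B') \<le> 2 * real CARD('d)"
    unfolding A_def B'_def by (rule card_nbrs_diff)+
  define K0 where "K0 = 4 * real CARD('d) * real N ^ 2 - real N ^ 2 * real (card A) - real N ^ 2 * real (card B')"
  have K0: "K0 \<ge> 0"
  proof -
    have "real N ^ 2 * real (card A) \<le> real N ^ 2 * (2 * real CARD('d))" by (rule mult_left_mono) (use cA in auto)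
    moreover have "real N ^ 2 * real (card B') \<le> real N ^ 2 * (2 * real CARD('d))" by (rule mult_left_mono) (use cA in auto)
    ultimately show ?thesis unfolding K0_def by (simp add: algebra_simps)
  qed
  have e: "Qop N g p = real N ^ 2 * (\<Sum>y\<in>A. g (y, b)) + real N ^ 2 * (\<Sum>y\<in>B'. g (a, y)) + K0 * g (a, b)"
    unfolding pab Qop_expand A_def B'_def K0_def ..
  show "0 \<le> Qop N g p \<and> Qop N g p \<le> (4 * real CARD('d) * real N ^ 2) * B"
  proof
    show "0 \<le> Qop N g p" unfolding e using s1 s2 gp K0 by simp
    have "Qop N g p \<le> real N ^ 2 * (real (card A) * B) + real N ^ 2 * (real (card B') * B) + K0 * B"
      unfolding e by (intro add_mono mult_left_mono s1 s2 gp K0) simp_all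
    also have "\<dots> = (4 * real CARD('d) * real N ^ 2) * B" unfolding K0_def by (simp add: algebra_simps)
    finally show "Qop N g p \<le> (4 * real CARD('d) * real N ^ 2) * B" .
  qed
qed


lemma periodic_int:
  fixes f :: "real ^ 'd::finite \<Rightarrow> real"
  assumes per: "\<forall>i y. f (y + axis i 1) = f y"
  shows "f (z + of_int m *\<^sub>R axis i 1) = f z"
proof -
  have nat: "f (w + real n *\<^sub>R axis i 1) = f w" for w n
  proof (induction n)
    case 0
    then show ?case by simp
  next
    case (Suc n)
    have "f (w + real (Suc n) *\<^sub>R axis i 1) = f ((w + real n *\<^sub>R axis i 1) + axis i 1)"
      by (simp add: algebra_simps)
    also have "\<dots> = f (w + real n *\<^sub>R axis i 1)" using per by blast
    finally show ?case using Suc.IH by simp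
  qed
  show ?thesis
  proof (cases "m \<ge> 0")
    case True
    then obtain n where "m = int n" using nonneg_int_cases by blast
    then show ?thesis using nat by simp
  next
    case False
    define n where "n = nat (- m)"
    have mn: "m = - int n" using False by (simp add: n_def)
    have "f (z + of_int m *\<^sub>R axis i 1) = f ((z + of_int m *\<^sub>R axis i 1) + real n *\<^sub>R axis i 1)"
      using nat by simp
    also have "(z + of_int m *\<^sub>R axis i 1) + real n *\<^sub>R axis i 1 = z" using mn by (simp add: algebra_simps)
    finally show ?thesis .
  qed
qed

lemma periodic_vec:
  fixes f :: "real ^ 'd::finite \<Rightarrow> real"
  assumes per: "\<forall>i y. f (y + axis i 1) = f y"
  shows "f (z + (\<chi> i. of_int (k i))) = f z"
proof -
  have S: "finite S \<Longrightarrow> f (w + (\<Sum>i\<in>S. of_int (k i) *\<^sub>R axis i 1)) = f w" for S w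
  proof (induction S arbitrary: w rule: finite_induct)
    case empty
    then show ?case by simp
  next
    case (insert j S)
    have "f (w + (\<Sum>i\<in>insert j S. of_int (k i) *\<^sub>R axis i 1))
        = f ((w + (\<Sum>i\<in>S. of_int (k i) *\<^sub>R axis i 1)) + of_int (k j) *\<^sub>R axis j 1)"
      using insert by (simp add: algebra_simps)
    also have "\<dots> = f (w + (\<Sum>i\<in>S. of_int (k i) *\<^sub>R axis i 1))" by (rule periodic_int[OF per])
    finally show ?case using insert.IH by simp
  qed
  have "(\<chi> i. of_int (k i)) = (\<Sum>i\<in>UNIV. of_int (k i) *\<^sub>R axis i (1::real))"
    by (simp add: vec_eq_iff axis_def if_distrib cong: if_cong)
  then show ?thesis using S[of UNIV z] by simp
qed

lemma torus_bounded:
  fixes f :: "real ^ 'd::finite \<Rightarrow> real"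
  assumes "torus_continuous f"
  shows "\<exists>M. \<forall>y. \<bar>f y\<bar> \<le> M"
proof -
  have cont: "continuous_on UNIV f" and per: "\<forall>i y. f (y + axis i 1) = f y"
    using assms by (auto simp: torus_continuous_def)
  have "compact (f ` cbox 0 1)"
    by (rule compact_continuous_image) (use cont continuous_on_subset in blast, simp)
  then obtain M where M: "\<forall>x\<in>f ` cbox 0 1. norm x \<le> M"
    using compact_imp_bounded bounded_iff by blast
  have "\<bar>f y\<bar> \<le> M" for y
  proof -
    define k where "k i = - \<lfloor>y $ i\<rfloor>" for i
    define y0 where "y0 = y + (\<chi> i. of_int (k i))"
    have "y0 \<in> cbox 0 1"
      unfolding mem_box_cart
    proof
      fix i
      have "of_int \<lfloor>y$i\<rfloor> \<le> y$i" "y$i < of_int \<lfloor>y$i\<rfloor> + 1" using floor_correct by auto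
      then show "0 $ i \<le> y0 $ i \<and> y0 $ i \<le> 1 $ i" by (simp add: y0_def k_def, linarith)
    qed
    then have "\<bar>f y0\<bar> \<le> M" using M by auto
    moreover have "f y0 = f y" unfolding y0_def by (rule periodic_vec[OF per])
    ultimately show ?thesis by simp
  qed
  then show ?thesis by blast
qed

lemma sup_norm_ge:
  assumes "torus_continuous f" shows "\<bar>f y\<bar> \<le> sup_norm f"
proof -
  obtain M where "\<forall>y. \<bar>f y\<bar> \<le> M" using torus_bounded[OF assms] by blast
  then have "bdd_above (range (\<lambda>y. \<bar>f y\<bar>))" by (intro bdd_aboveI2) auto
  then show ?thesis unfolding sup_norm_def by (rule cSUP_upper[OF UNIV_I])
qed

lemma sup_norm2_ge:
  fixes \<phi> :: "'d::finite \<Rightarrow> real ^ 'd \<Rightarrow> real"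
  assumes "\<forall>l. torus_continuous (\<phi> l)" shows "\<bar>\<phi> l y\<bar> \<le> sup_norm2 \<phi>"
proof -
  have "\<forall>l. \<exists>M. \<forall>y. \<bar>\<phi> l y\<bar> \<le> M" using torus_bounded assms by blast
  then obtain M where M: "\<forall>l y. \<bar>\<phi> l y\<bar> \<le> M l" by metis
  have M0: "0 \<le> M l" for l using M[rule_format, of l 0] by linarith
  have "\<bar>\<phi> l y\<bar> \<le> (\<Sum>l\<in>UNIV. M l)" for l y
    using M[rule_format, of l y] member_le_sum[of l UNIV M] M0 by force
  then have "bdd_above (range (\<lambda>(l, y). \<bar>\<phi> l y\<bar>))" by (intro bdd_aboveI2) auto
  then have "(\<lambda>(l, y). \<bar>\<phi> l y\<bar>) (l, y) \<le> Sup (range (\<lambda>(l, y). \<bar>\<phi> l y\<bar>))"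
    by (rule cSUP_upper[OF UNIV_I])
  then show ?thesis unfolding sup_norm2_def by simp
qed


lemma init_prob_bounds:
  fixes \<rho>0 :: "real ^ 'd::finite \<Rightarrow> real" and x :: "'d \<Rightarrow> nat"
  assumes tc: "torus_continuous \<rho>0" and nn: "\<forall>y. \<rho>0 y \<ge> 0" and N0: "N > 0"
  shows "0 \<le> init_prob n N \<rho>0 x \<and> init_prob n N \<rho>0 x \<le> real n * sup_norm \<rho>0 / real N ^ CARD('d)"
proof -
  define lo where "lo = cell_center N x - (\<chi> i. 1 / (2 * real N))"
  define hi where "hi = cell_center N x + (\<chi> i. 1 / (2 * real N))"
  have cell: "cell N x = cbox lo hi" unfolding cell_def lo_def hi_def ..
  have cont: "continuous_on (cbox lo hi) \<rho>0"
    using tc continuous_on_subset unfolding torus_continuous_def by blast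
  have int: "\<rho>0 integrable_on cbox lo hi" by (rule integrable_continuous[OF cont])
  have i0: "0 \<le> integral (cbox lo hi) \<rho>0" by (rule integral_nonneg[OF int]) (use nn in auto)
  have "integral (cbox lo hi) \<rho>0 \<le> integral (cbox lo hi) (\<lambda>_. sup_norm \<rho>0)"
    by (rule integral_le[OF int]) (use sup_norm_ge[OF tc] in \<open>auto simp: abs_le_iff\<close>)
  also have "\<dots> = measure lborel (cbox lo hi) * sup_norm \<rho>0" by simp
  also have "measure lborel (cbox lo hi) = (1 / real N) ^ CARD('d)"
  proof -
    have le: "lo $ i \<le> hi $ i" for i unfolding lo_def hi_def by simp
    then have "lo \<in> cbox lo hi" by (simp add: mem_box_cart)
    then have "cbox lo hi \<noteq> {}" by blast
    then have "measure lborel (cbox lo hi) = (\<Prod>i\<in>UNIV. hi $ i - lo $ i)" by (rule content_cbox_cart)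
    also have "\<dots> = (\<Prod>i\<in>(UNIV::'d set). 1 / real N)"
      by (rule prod.cong) (simp_all add: lo_def hi_def field_simps)
    finally show ?thesis by simp
  qed
  finally have i1: "integral (cbox lo hi) \<rho>0 \<le> (1 / real N) ^ CARD('d) * sup_norm \<rho>0" .
  have "real n * integral (cbox lo hi) \<rho>0 \<le> real n * ((1 / real N) ^ CARD('d) * sup_norm \<rho>0)"
    by (rule mult_left_mono[OF i1]) simp
  also have "\<dots> = real n * sup_norm \<rho>0 / real N ^ CARD('d)" by (simp add: power_divide)
  finally show ?thesis unfolding init_prob_def cell using i0 by simp
qed

lemma R_formula:
  fixes \<rho>0 :: "real ^ 'd::finite \<Rightarrow> real" and a b :: "'d \<Rightarrow> nat"
  assumes ab: "(a, b) \<in> Pset N"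
  shows "(\<Sum>\<eta>\<in>configs N. init_dist n N \<rho>0 \<eta> * Hf (a, b) \<eta>) = init_prob n N \<rho>0 a * init_prob n N \<rho>0 b"
proof -
  have a: "a \<in> sites N" and b: "b \<in> sites N" and neq: "a \<noteq> b" using ab by (auto simp: Pset_def)
  define \<rho> where "\<rho> = init_prob n N \<rho>0"
  define f where "f x \<beta> = (if \<beta> then \<rho> x else 1 - \<rho> x) * (if x = a \<or> x = b then (if \<beta> then 1 else 0) else 1)"
    for x :: "'d \<Rightarrow> nat" and \<beta> :: bool
  have fin: "finite (sites N :: ('d \<Rightarrow> nat) set)" by (rule finite_sites)
  have pe: "(\<Prod>x\<in>sites N. \<Sum>\<beta>\<in>UNIV. f x \<beta>) = (\<Sum>\<eta>\<in>configs N. \<Prod>x\<in>sites N. f x (\<eta> x))"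
    unfolding configs_def by (rule prod_sum_PiE[OF fin]) simp
  have lhs: "(\<Prod>x\<in>sites N. f x (\<eta> x)) = init_dist n N \<rho>0 \<eta> * Hf (a, b) \<eta>" for \<eta>
  proof -
    have "(\<Prod>x\<in>sites N. f x (\<eta> x)) = init_dist n N \<rho>0 \<eta> *
        (\<Prod>x\<in>sites N. (if x = a \<or> x = b then (if \<eta> x then 1 else 0) else 1))"
      unfolding f_def init_dist_def \<rho>_def by (simp add: prod.distrib)
    also have "(\<Prod>x\<in>sites N. (if x = a \<or> x = b then (if \<eta> x then 1 else 0) else (1::real)))
        = (\<Prod>x\<in>{a, b}. (if \<eta> x then 1 else 0))"
    proof -
      have "(\<Prod>x\<in>sites N. (if x = a \<or> x = b then (if \<eta> x then 1 else 0) else (1::real)))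
          = (\<Prod>x\<in>{x\<in>sites N. x = a \<or> x = b}. (if \<eta> x then 1 else 0))"
        by (simp add: prod.inter_filter[OF fin])
      also have "{x\<in>sites N. x = a \<or> x = b} = {a, b}" using a b by auto
      finally show ?thesis .
    qed
    also have "\<dots> = Hf (a, b) \<eta>" using neq by (simp add: Hf_def)
    finally show ?thesis .
  qed
  have rhs: "(\<Prod>x\<in>sites N. \<Sum>\<beta>\<in>UNIV. f x \<beta>) = \<rho> a * \<rho> b"
  proof -
    have "(\<Sum>\<beta>\<in>UNIV. f x \<beta>) = (if x = a \<or> x = b then \<rho> x else 1)" for x
      by (simp add: f_def UNIV_bool)
    then have "(\<Prod>x\<in>sites N. \<Sum>\<beta>\<in>UNIV. f x \<beta>) = (\<Prod>x\<in>sites N. if x = a \<or> x = b then \<rho> x else 1)"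
      by simp
    also have "\<dots> = (\<Prod>x\<in>{x\<in>sites N. x = a \<or> x = b}. \<rho> x)"
      by (simp add: prod.inter_filter[OF fin])
    also have "{x\<in>sites N. x = a \<or> x = b} = {a, b}" using a b by auto
    finally show ?thesis using neq by simp
  qed
  show ?thesis using pe lhs rhs unfolding \<rho>_def by simp
qed


lemma arith_helper: "(A::real) > 0 \<Longrightarrow> B > 0 \<Longrightarrow> A * (A / B^2 * p * (B * s / A)^2) = p * s^2"
  by (simp add: field_simps power2_eq_square)

theorem lemma4p4:
  fixes \<rho>0 :: "real ^ 'd::finite \<Rightarrow> real"
    and \<phi> :: "'d \<Rightarrow> real ^ 'd \<Rightarrow> real"
    and n N :: nat and T t :: real
  assumes "T > 0"
    and "torus_continuous \<rho>0" and "\<forall>y. \<rho>0 y \<ge> 0"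
    and "\<forall>l. torus_continuous (\<phi> l)"
    and "n \<ge> 1" and "N \<ge> 2"
    and "\<forall>x\<in>sites N. init_prob n N \<rho>0 x \<le> 1"
    and "0 \<le> t" and "t \<le> T"
  shows "expected_pairing n N \<rho>0 \<phi> t \<le> real CARD('d) * sup_norm2 \<phi> * (sup_norm \<rho>0)^2"
proof -
  note tc = assms(2) and nn = assms(3) and phic = assms(4) and n1 = assms(5) and N2 = assms(6)
    and t0 = assms(8)
  have N0: "N > 0" using N2 by simp
  define cc where "cc = 4 * real CARD('d) * real N ^ 2"
  have cc0: "cc \<ge> 0" unfolding cc_def by simp
  define sh where "sh l x = x(l := (x l + 1) mod N)" for l :: 'd and x :: "'d \<Rightarrow> nat"
  define W where "W l x = real N ^ CARD('d) / real n ^ 2 * \<phi> l (cell_center N x + (1 / (2 * real N)) *\<^sub>R axis l 1)"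
    for l x
  define G where "G \<eta> = (\<lambda>q. Hf q \<eta>)" for \<eta> :: "('d \<Rightarrow> nat) \<Rightarrow> bool"
  define m where "m = real n * sup_norm \<rho>0 / real N ^ CARD('d)"
  define R where "R = (\<lambda>q. \<Sum>\<eta>\<in>configs N. init_dist n N \<rho>0 \<eta> * Hf q \<eta>)"
  define S where "S g p = exp (-cc*t) * (\<Sum>j. t^j / fact j * (Qop N ^^ j) g p)"
    for g :: "('d \<Rightarrow> nat) \<times> ('d \<Rightarrow> nat) \<Rightarrow> real" and p
  have shP: "(x, sh l x) \<in> Pset N" if x: "x \<in> sites N" for x l
  proof -
    have "sh l x \<in> nbrs N x" unfolding nbrs_def sh_def
      by (rule image_eqI[where x="(l, 1)"]) auto
    then show ?thesis using not_self_nbr[OF N2 x] nbrs_sites[OF N0 x] x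
      by (auto simp: Pset_def)
  qed
  have pf: "pair_functional n N \<phi> = (\<lambda>\<eta>. \<Sum>l\<in>UNIV. \<Sum>x\<in>sites N. W l x * Hf (x, sh l x) \<eta>)"
    unfolding pair_functional_def W_def sh_def Hf_def
    by (simp add: fun_eq_iff sum_distrib_left mult_ac)
  have genk: "(gen N ^^ k) (pair_functional n N \<phi>) \<eta>
      = (\<Sum>l\<in>UNIV. \<Sum>x\<in>sites N. W l x * (Kop N ^^ k) (G \<eta>) (x, sh l x))"
    if eta: "\<eta> \<in> configs N" for \<eta> k
  proof -
    have l: "lin (gen N ^^ k)" by (rule lin_funpow[OF lin_gen])
    have "(gen N ^^ k) (pair_functional n N \<phi>) \<eta>
        = (\<Sum>l\<in>UNIV. \<Sum>x\<in>sites N. W l x * (gen N ^^ k) (Hf (x, sh l x)) \<eta>)"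
      unfolding pf by (simp add: lin_sum[OF l] lin_scale[OF l] finite_sites)
    also have "\<dots> = (\<Sum>l\<in>UNIV. \<Sum>x\<in>sites N. W l x * (Kop N ^^ k) (G \<eta>) (x, sh l x))"
      by (intro sum.cong refl) (simp add: duality[OF N2 eta shP] G_def)
    finally show ?thesis .
  qed
  have KE: "(\<lambda>h p. Qop N h p - cc * h p) = (Kop N :: (('d \<Rightarrow> nat) \<times> ('d \<Rightarrow> nat) \<Rightarrow> real) \<Rightarrow> _)" unfolding cc_def by (rule Kop_eq[symmetric])
  have Qb: "\<forall>p\<in>Pset N. \<bar>Qop N g p\<bar> \<le> cc * B" if "\<forall>q\<in>Pset N. \<bar>g q\<bar> \<le> B" for g :: "('d \<Rightarrow> nat) \<times> ('d \<Rightarrow> nat) \<Rightarrow> real" and B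
    unfolding cc_def by (rule Qop_bnd[OF N0 that])
  have Qp: "\<forall>p\<in>Pset N. 0 \<le> Qop N g p \<and> Qop N g p \<le> cc * B" if "\<forall>q\<in>Pset N. 0 \<le> g q \<and> g q \<le> B" for g :: "('d \<Rightarrow> nat) \<times> ('d \<Rightarrow> nat) \<Rightarrow> real" and B
    unfolding cc_def by (rule Qop_pos[OF N0 that])
  have ser: "(\<lambda>k. t^k / fact k * (Kop N ^^ k) g p) sums S g p"
    if "p \<in> Pset N" "\<forall>q\<in>Pset N. \<bar>g q\<bar> \<le> B" for g p B
    using series_main[where Q="Qop N" and P="Pset N" and c=cc, OF lin_Qop Qb cc0 that, of t]
    unfolding KE S_def .
  have bnd: "0 \<le> S g p \<and> S g p \<le> B"
    if "p \<in> Pset N" "\<forall>q\<in>Pset N. 0 \<le> g q \<and> g q \<le> B" for g p B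
    using series_bound[where Q="Qop N" and P="Pset N" and c=cc, OF Qp cc0 t0 that]
    unfolding S_def .
  have Gb: "\<forall>q\<in>Pset N. \<bar>G \<eta> q\<bar> \<le> 1" for \<eta> by (simp add: G_def Hf_def)
  have semi: "semigroup N t (pair_functional n N \<phi>) \<eta>
      = (\<Sum>l\<in>UNIV. \<Sum>x\<in>sites N. W l x * S (G \<eta>) (x, sh l x))"
    if eta: "\<eta> \<in> configs N" for \<eta>
  proof -
    have "(\<lambda>k. t^k / fact k * (gen N ^^ k) (pair_functional n N \<phi>) \<eta>)
        = (\<lambda>k. \<Sum>l\<in>UNIV. \<Sum>x\<in>sites N. W l x * (t^k / fact k * (Kop N ^^ k) (G \<eta>) (x, sh l x)))"
      by (simp add: genk[OF eta] sum_distrib_left mult_ac)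
    moreover have "(\<lambda>k. \<Sum>l\<in>UNIV. \<Sum>x\<in>sites N. W l x * (t^k / fact k * (Kop N ^^ k) (G \<eta>) (x, sh l x)))
        sums (\<Sum>l\<in>UNIV. \<Sum>x\<in>sites N. W l x * S (G \<eta>) (x, sh l x))"
      by (intro sums_sum sums_mult ser[OF shP Gb])
    ultimately show ?thesis unfolding semigroup_def by (simp add: sums_iff)
  qed
  have Rb: "\<forall>q\<in>Pset N. 0 \<le> R q \<and> R q \<le> m^2"
  proof
    fix q :: "('d \<Rightarrow> nat) \<times> ('d \<Rightarrow> nat)" assume q: "q \<in> Pset N"
    obtain a b where qab: "q = (a, b)" by (cases q)
    have Rq: "R q = init_prob n N \<rho>0 a * init_prob n N \<rho>0 b"
      unfolding R_def qab by (rule R_formula) (use q qab in simp)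
    have ba: "0 \<le> init_prob n N \<rho>0 a \<and> init_prob n N \<rho>0 a \<le> m"
      and bb: "0 \<le> init_prob n N \<rho>0 b \<and> init_prob n N \<rho>0 b \<le> m"
      using init_prob_bounds[OF tc nn N0] unfolding m_def by blast+
    show "0 \<le> R q \<and> R q \<le> m^2"
      unfolding Rq power2_eq_square using ba bb by (auto intro: mult_mono)
  qed
  have SR: "(\<Sum>\<eta>\<in>configs N. init_dist n N \<rho>0 \<eta> * S (G \<eta>) p) = S R p" if p: "p \<in> Pset N" for p
  proof -
    have lk: "lin (Kop N ^^ k)" for k by (rule lin_funpow[OF lin_Kop])
    have fc: "finite (configs N :: (('d \<Rightarrow> nat) \<Rightarrow> bool) set)"
      unfolding configs_def by (intro finite_PiE finite_sites) simp
    have RG: "R = (\<lambda>q. \<Sum>\<eta>\<in>configs N. init_dist n N \<rho>0 \<eta> * G \<eta> q)" unfolding R_def G_def ..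
    have h1: "(\<lambda>k. \<Sum>\<eta>\<in>configs N. init_dist n N \<rho>0 \<eta> * (t^k / fact k * (Kop N ^^ k) (G \<eta>) p))
        sums (\<Sum>\<eta>\<in>configs N. init_dist n N \<rho>0 \<eta> * S (G \<eta>) p)"
      by (intro sums_sum sums_mult ser[OF p Gb])
    have h2: "(\<lambda>k. \<Sum>\<eta>\<in>configs N. init_dist n N \<rho>0 \<eta> * (t^k / fact k * (Kop N ^^ k) (G \<eta>) p))
        = (\<lambda>k. t^k / fact k * (Kop N ^^ k) R p)"
    proof -
      have KR: "(Kop N ^^ k) R p = (\<Sum>\<eta>\<in>configs N. init_dist n N \<rho>0 \<eta> * (Kop N ^^ k) (G \<eta>) p)" for k
        unfolding RG by (simp only: lin_sum[OF lk fc] lin_scale[OF lk])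
      show ?thesis by (simp add: KR sum_distrib_left mult_ac)
    qed
    have h3: "(\<lambda>k. t^k / fact k * (Kop N ^^ k) R p) sums S R p"
      by (rule ser[OF p, of R "m^2"]) (use Rb in auto)
    from h1 have "(\<lambda>k. t^k / fact k * (Kop N ^^ k) R p) sums (\<Sum>\<eta>\<in>configs N. init_dist n N \<rho>0 \<eta> * S (G \<eta>) p)"
      unfolding h2 .
    from sums_unique2[OF this h3] show ?thesis .
  qed
  have phib: "\<bar>W l x\<bar> \<le> real N ^ CARD('d) / real n ^ 2 * sup_norm2 \<phi>" for l x
  proof -
    have "\<bar>W l x\<bar> = real N ^ CARD('d) / real n ^ 2 * \<bar>\<phi> l (cell_center N x + (1 / (2 * real N)) *\<^sub>R axis l 1)\<bar>"
      unfolding W_def by (simp add: abs_mult)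
    also have "\<dots> \<le> real N ^ CARD('d) / real n ^ 2 * sup_norm2 \<phi>"
      by (rule mult_left_mono[OF sup_norm2_ge[OF phic]]) simp
    finally show ?thesis .
  qed
  have each: "W l x * S R (x, sh l x) \<le> real N ^ CARD('d) / real n ^ 2 * sup_norm2 \<phi> * m^2"
    if x: "x \<in> sites N" for l x
  proof -
    have sb: "0 \<le> S R (x, sh l x) \<and> S R (x, sh l x) \<le> m^2" by (rule bnd[OF shP[OF x] Rb])
    have "W l x * S R (x, sh l x) \<le> \<bar>W l x\<bar> * S R (x, sh l x)"
      using sb by (intro mult_right_mono) auto
    also have "\<dots> \<le> (real N ^ CARD('d) / real n ^ 2 * sup_norm2 \<phi>) * m^2"
    proof (rule mult_mono)
      show "\<bar>W l x\<bar> \<le> real N ^ CARD('d) / real n ^ 2 * sup_norm2 \<phi>" by (rule phib)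
      then show "0 \<le> real N ^ CARD('d) / real n ^ 2 * sup_norm2 \<phi>" using abs_ge_zero[of "W l x"] by linarith
    qed (use sb in auto)
    finally show ?thesis .
  qed
  have "expected_pairing n N \<rho>0 \<phi> t
      = (\<Sum>\<eta>\<in>configs N. init_dist n N \<rho>0 \<eta> * (\<Sum>l\<in>UNIV. \<Sum>x\<in>sites N. W l x * S (G \<eta>) (x, sh l x)))"
    unfolding expected_pairing_def by (intro sum.cong refl) (simp add: semi)
  also have "\<dots> = (\<Sum>l\<in>UNIV. \<Sum>x\<in>sites N. W l x * (\<Sum>\<eta>\<in>configs N. init_dist n N \<rho>0 \<eta> * S (G \<eta>) (x, sh l x)))"
  proof -
    have "(\<Sum>\<eta>\<in>configs N. init_dist n N \<rho>0 \<eta> * (\<Sum>l\<in>UNIV. \<Sum>x\<in>sites N. W l x * S (G \<eta>) (x, sh l x)))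
       = (\<Sum>\<eta>\<in>configs N. \<Sum>l\<in>UNIV. \<Sum>x\<in>sites N. init_dist n N \<rho>0 \<eta> * (W l x * S (G \<eta>) (x, sh l x)))"
      by (simp only: sum_distrib_left)
    also have "\<dots> = (\<Sum>l\<in>UNIV. \<Sum>\<eta>\<in>configs N. \<Sum>x\<in>sites N. init_dist n N \<rho>0 \<eta> * (W l x * S (G \<eta>) (x, sh l x)))"
      by (rule sum.swap)
    also have "\<dots> = (\<Sum>l\<in>UNIV. \<Sum>x\<in>sites N. \<Sum>\<eta>\<in>configs N. init_dist n N \<rho>0 \<eta> * (W l x * S (G \<eta>) (x, sh l x)))"
      by (rule sum.cong[OF refl], rule sum.swap)
    also have "\<dots> = (\<Sum>l\<in>UNIV. \<Sum>x\<in>sites N. W l x * (\<Sum>\<eta>\<in>configs N. init_dist n N \<rho>0 \<eta> * S (G \<eta>) (x, sh l x)))"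
      by (simp only: sum_distrib_left mult.left_commute)
    finally show ?thesis .
  qed
  also have "\<dots> = (\<Sum>l\<in>UNIV. \<Sum>x\<in>sites N. W l x * S R (x, sh l x))"
    by (intro sum.cong refl) (simp add: SR shP)
  also have "\<dots> \<le> (\<Sum>l\<in>(UNIV::'d set). \<Sum>x\<in>(sites N :: ('d \<Rightarrow> nat) set). real N ^ CARD('d) / real n ^ 2 * sup_norm2 \<phi> * m^2)"
  proof (rule sum_mono)
    fix l :: 'd assume "l \<in> UNIV"
    show "(\<Sum>x\<in>sites N. W l x * S R (x, sh l x)) \<le> (\<Sum>x\<in>(sites N :: ('d \<Rightarrow> nat) set). real N ^ CARD('d) / real n ^ 2 * sup_norm2 \<phi> * m^2)"
    proof (rule sum_mono)
      fix x :: "'d \<Rightarrow> nat" assume "x \<in> sites N"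
      then show "W l x * S R (x, sh l x) \<le> real N ^ CARD('d) / real n ^ 2 * sup_norm2 \<phi> * m^2" by (rule each)
    qed
  qed
  also have "\<dots> = real CARD('d) * sup_norm2 \<phi> * (sup_norm \<rho>0)^2"
  proof -
    have A: "real N ^ CARD('d) > 0" "real n > 0" using n1 N0 by auto
    have "(\<Sum>l\<in>(UNIV::'d set). \<Sum>x\<in>(sites N :: ('d \<Rightarrow> nat) set). real N ^ CARD('d) / real n ^ 2 * sup_norm2 \<phi> * m^2)
       = real CARD('d) * (real N ^ CARD('d) * (real N ^ CARD('d) / real n ^ 2 * sup_norm2 \<phi> * m^2))"
      by (simp add: card_sites)
    also have "real N ^ CARD('d) * (real N ^ CARD('d) / real n ^ 2 * sup_norm2 \<phi> * m^2) = sup_norm2 \<phi> * (sup_norm \<rho>0)^2"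
      unfolding m_def using arith_helper[OF A] .
    finally show ?thesis by simp
  qed
  finally show ?thesis .
qed


end
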